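(* Let $n\geq 4$. If $\mathcal{C}\subseteq S_n$ is a code with minimum Kendall's $\tau$-distance $4$ (i.e., $d_K(\sigma,\pi)\geq 4$ for all distinct $\sigma,\pi\in\mathcal{C}$), then $|\mathcal{C}|\leq \frac{n!}{2(n-1)}$.
   Context: $S_n$ denotes the set of all permutations of $[n]=\{1,\dots,n\}$, written $\sigma=[\sigma(1),\dots,\sigma(n)]$. An adjacent transposition applied to $\sigma$ exchanges the entries in positions $i$ and $i+1$ for some $1\leq i\leq n-1$. The Kendall's $\tau$-distance $d_K(\sigma,\pi)$ is the minimum number of adjacent transpositions needed to transform $\sigma$ into $\pi$. *)

theory Defs
  imports Main "HOL-Combinatorics.Multiset_Permutations"
begin

text \<open>Permutations of [n] are written in one-line notation as lists
  [sigma(1),...,sigma(n)]; S_n is permutations_of_set {1..n}.\<close>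

definition adj_swap :: "nat \<Rightarrow> 'a list \<Rightarrow> 'a list" where
  "adj_swap i xs = xs[i := xs ! Suc i, Suc i := xs ! i]"

inductive adj_reach :: "nat \<Rightarrow> 'a list \<Rightarrow> 'a list \<Rightarrow> bool" where
  refl: "adj_reach 0 xs xs"
| step: "Suc i < length xs \<Longrightarrow> adj_reach k (adj_swap i xs) ys \<Longrightarrow> adj_reach (Suc k) xs ys"

definition kendall_dist :: "'a list \<Rightarrow> 'a list \<Rightarrow> nat" where
  "kendall_dist xs ys = (LEAST k. adj_reach k xs ys)"

end

theory Submission
  imports Defs "HOL-Combinatorics.Permutations"
begin

lemma swap_len[simp]: "length (adj_swap i xs) = length xs"
  by (simp add: adj_swap_def)

lemma swap_nth:
  assumes "Suc i < length xs" "k < length xs"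
  shows "adj_swap i xs ! k = xs ! transpose i (Suc i) k"
  using assms by (auto simp: adj_swap_def nth_list_update transpose_def)

lemma transpose_lt:
  assumes "Suc i < n" "k < n" shows "transpose i (Suc i) k < n"
  using assms by (auto simp: transpose_def)

lemma swap_invol:
  assumes "Suc i < length xs"
  shows "adj_swap i (adj_swap i xs) = xs"
proof (rule nth_equalityI)
  fix k assume k: "k < length (adj_swap i (adj_swap i xs))"
  then have k': "k < length xs" by simp
  show "adj_swap i (adj_swap i xs) ! k = xs ! k"
    using assms k' transpose_lt[OF assms k']
    by (simp add: swap_nth)
qed simp

lemma swap_perm:
  assumes "xs \<in> permutations_of_set A" "Suc i < length xs"
  shows "adj_swap i xs \<in> permutations_of_set A"
  using assms by (auto simp: permutations_of_set_def adj_swap_def)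

lemma triangle:
  assumes d: "distinct xs" and a: "Suc i < length xs" "Suc i' < length xs" "Suc j < length xs"
  shows "adj_swap i xs \<noteq> adj_swap j (adj_swap i' xs)"
proof
  assume eq: "adj_swap i xs = adj_swap j (adj_swap i' xs)"
  have "transpose i (Suc i) = transpose i' (Suc i') \<circ> transpose j (Suc j)"
  proof
    fix k
    show "transpose i (Suc i) k = (transpose i' (Suc i') \<circ> transpose j (Suc j)) k"
    proof (cases "k < length xs")
      case True
      have t1: "transpose j (Suc j) k < length xs" using transpose_lt a True by blast
      have "xs ! transpose i (Suc i) k = adj_swap i xs ! k" using swap_nth a True by metis
      also have "\<dots> = adj_swap j (adj_swap i' xs) ! k" using eq by simp
      also have "\<dots> = adj_swap i' xs ! transpose j (Suc j) k" using swap_nth[of j "adj_swap i' xs" k] a True by simp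
      also have "\<dots> = xs ! transpose i' (Suc i') (transpose j (Suc j) k)"
        using swap_nth[of i' xs "transpose j (Suc j) k"] a t1 by simp
      finally have "xs ! transpose i (Suc i) k = xs ! transpose i' (Suc i') (transpose j (Suc j) k)" .
      moreover have "transpose i (Suc i) k < length xs" using transpose_lt a True by blast
      moreover have "transpose i' (Suc i') (transpose j (Suc j) k) < length xs"
        using transpose_lt a t1 by blast
      ultimately show ?thesis using d by (simp add: nth_eq_iff_index_eq)
    next
      case False
      then show ?thesis using a by (auto simp: transpose_def)
    qed
  qed
  then have "sign (transpose i (Suc i)) = sign (transpose i' (Suc i') \<circ> transpose j (Suc j))" by simp
  also have "\<dots> = 1" by (simp add: sign_compose permutation_swap_id sign_swap_id)
  finally show False by (simp add: sign_swap_id)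
qed

lemma nb_inj:
  assumes d: "distinct xs" and a: "Suc i < length xs" "Suc i' < length xs"
    and eq: "adj_swap i xs = adj_swap i' xs"
  shows "i = i'"
proof -
  have "xs ! transpose i (Suc i) i = xs ! transpose i' (Suc i') i"
    using eq swap_nth a by (metis Suc_lessD)
  moreover have "transpose i' (Suc i') i < length xs" using transpose_lt a by (metis Suc_lessD)
  ultimately have "Suc i = transpose i' (Suc i') i" using d a by (simp add: nth_eq_iff_index_eq)
  then show ?thesis by (auto simp: transpose_def split: if_splits)
qed

lemma kd_le: "adj_reach k xs ys \<Longrightarrow> kendall_dist xs ys \<le> k"
  unfolding kendall_dist_def by (rule Least_le)

lemma r2:
  assumes "Suc i < length s" "Suc i' < length s'" "adj_swap i s = adj_swap i' s'"
  shows "adj_reach 2 s s'"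
proof -
  have "adj_reach 0 (adj_swap i' (adj_swap i' s')) s'"
    using swap_invol[OF assms(2)] adj_reach.refl by metis
  then have "adj_reach 1 (adj_swap i' s') s'"
    using adj_reach.step[of i' "adj_swap i' s'" 0 s'] assms(2) by simp
  then have "adj_reach 1 (adj_swap i s) s'" using assms(3) by simp
  then show ?thesis using adj_reach.step assms(1) by (metis numeral_2_eq_2 One_nat_def)
qed

lemma r3:
  assumes "Suc i < length s" "Suc j < length s" "Suc i' < length s'"
    "adj_swap j (adj_swap i s) = adj_swap i' s'"
  shows "adj_reach 3 s s'"
proof -
  have "adj_reach 0 (adj_swap i' (adj_swap i' s')) s'"
    using swap_invol[OF assms(3)] adj_reach.refl by metis
  then have "adj_reach 1 (adj_swap i' s') s'"
    using adj_reach.step[of i' "adj_swap i' s'" 0 s'] assms(3) by simp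
  then have "adj_reach 1 (adj_swap j (adj_swap i s)) s'" using assms(4) by simp
  then have "adj_reach 2 (adj_swap i s) s'" using adj_reach.step assms(2)
    by (metis numeral_2_eq_2 One_nat_def swap_len)
  then show ?thesis using adj_reach.step assms(1) by (metis numeral_3_eq_3 numeral_2_eq_2)
qed

theorem corollary2:
  fixes n :: nat and C :: "nat list set"
  assumes "n \<ge> 4"
    and "C \<subseteq> permutations_of_set {1..n}"
    and "\<forall>\<sigma>\<in>C. \<forall>\<pi>\<in>C. \<sigma> \<noteq> \<pi> \<longrightarrow> kendall_dist \<sigma> \<pi> \<ge> 4"
  shows "real (card C) \<le> fact n / (2 * (real n - 1))"
proof -
  define m where "m = n - 1"
  define S where "S = permutations_of_set {1..n}"
  have CS: "C \<subseteq> S" using assms(2) S_def by simp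
  have lenS: "\<And>s. s \<in> S \<Longrightarrow> length s = n"
    unfolding S_def using length_finite_permutations_of_set by fastforce
  have distS: "\<And>s. s \<in> S \<Longrightarrow> distinct s"
    unfolding S_def using permutations_of_setD by blast
  have im: "\<And>i. i < m \<longleftrightarrow> Suc i < n" using assms(1) m_def by auto
  define Q where "Q (s::nat list) = (\<lambda>(i,j). (adj_swap i s, j)) ` ({..<m}\<times>{..<m})
      \<union> (\<lambda>(i,j). (adj_swap j (adj_swap i s), j)) ` ({..<m}\<times>{..<m})" for s
  have cardQ: "card (Q s) = 2*m*m" if s: "s \<in> S" for s
  proof -
    have l: "length s = n" "distinct s" using lenS distS s by auto
    have i1: "inj_on (\<lambda>(i,j). (adj_swap i s, j)) ({..<m}\<times>{..<m})"
      by (auto simp: inj_on_def im l intro: nb_inj[OF l(2)])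
    have i2: "inj_on (\<lambda>(i,j). (adj_swap j (adj_swap i s), j)) ({..<m}\<times>{..<m})"
    proof (clarsimp simp: inj_on_def)
      fix a b a' assume h: "a < m" "b < m" "a' < m"
        "adj_swap b (adj_swap a s) = adj_swap b (adj_swap a' s)"
      then have "adj_swap a s = adj_swap a' s"
        by (metis swap_invol swap_len im l(1))
      then show "a = a'" using nb_inj[OF l(2)] h im l(1) by metis
    qed
    have dj: "(\<lambda>(i,j). (adj_swap i s, j)) ` ({..<m}\<times>{..<m}) \<inter>
        (\<lambda>(i,j). (adj_swap j (adj_swap i s), j)) ` ({..<m}\<times>{..<m}) = {}"
      using triangle[OF l(2)] im l(1) by auto
    show ?thesis unfolding Q_def
      by (subst card_Un_disjoint) (auto simp: dj card_image i1 i2)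
  qed
  have QS: "Q s \<subseteq> S \<times> {..<m}" if s: "s \<in> S" for s
    using s lenS im unfolding Q_def by (auto intro!: swap_perm simp: S_def)
  have disj: "Q s \<inter> Q s' = {}" if s: "s \<in> C" "s' \<in> C" "s \<noteq> s'" for s s'
  proof (rule ccontr)
    have l: "length s = n" "length s' = n" using s CS lenS by auto
    have d4: "kendall_dist s s' \<ge> 4" "kendall_dist s' s \<ge> 4" using assms(3) s by auto
    assume "Q s \<inter> Q s' \<noteq> {}"
    then obtain x where x: "x \<in> Q s" "x \<in> Q s'" by blast
    have qf: "\<And>t. x \<in> Q t \<Longrightarrow> (\<exists>i<m. \<exists>j<m. x = (adj_swap i t, j)) \<or>
        (\<exists>i<m. \<exists>j<m. x = (adj_swap j (adj_swap i t), j))"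
      unfolding Q_def by auto
    have s2: "\<exists>k\<le>3. adj_reach k s s' \<or> adj_reach k s' s"
      if "adj_reach 2 s s'" using that by (intro exI[of _ 2]) auto
    have "\<exists>k\<le>3. adj_reach k s s' \<or> adj_reach k s' s"
    proof -
      from qf[OF x(1)] qf[OF x(2)] show ?thesis
      proof (elim disjE exE conjE)
        fix i j i' j' assume h: "i < m" "j < m" "i' < m" "j' < m"
          "x = (adj_swap i s, j)" "x = (adj_swap i' s', j')"
        then have "adj_swap i s = adj_swap i' s'" using h(5,6) by (metis prod.inject)
        then show ?thesis using r2[of i s i' s'] im l h s2 by metis
      next
        fix i j i' j' assume h: "i < m" "j < m" "i' < m" "j' < m"
          "x = (adj_swap i s, j)" "x = (adj_swap j' (adj_swap i' s'), j')"
        then have "adj_swap j' (adj_swap i' s') = adj_swap i s" using h(5,6) by (metis prod.inject)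
        then have "adj_reach 3 s' s" using r3[of i' s' j' i s] im l h by metis
        then show ?thesis by (intro exI[of _ 3]) auto
      next
        fix i j i' j' assume h: "i < m" "j < m" "i' < m" "j' < m"
          "x = (adj_swap j (adj_swap i s), j)" "x = (adj_swap i' s', j')"
        then have "adj_swap j (adj_swap i s) = adj_swap i' s'" using h(5,6) by (metis prod.inject)
        then have "adj_reach 3 s s'" using r3[of i s j i' s'] im l h by metis
        then show ?thesis by (intro exI[of _ 3]) auto
      next
        fix i j i' j' assume h: "i < m" "j < m" "i' < m" "j' < m"
          "x = (adj_swap j (adj_swap i s), j)" "x = (adj_swap j' (adj_swap i' s'), j')"
        then have "adj_swap j (adj_swap i s) = adj_swap j (adj_swap i' s')" using h(5,6) by (metis prod.inject)
        then have "adj_swap i s = adj_swap i' s'"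
          by (metis swap_invol swap_len im l h(2))
        then show ?thesis using r2[of i s i' s'] im l h s2 by metis
      qed
    qed
    then obtain k where "k \<le> 3" "adj_reach k s s' \<or> adj_reach k s' s" by blast
    then have "kendall_dist s s' \<le> 3 \<or> kendall_dist s' s \<le> 3" using kd_le le_trans by blast
    then show False using d4 by linarith
  qed
  have fin: "finite C" using CS finite_subset unfolding S_def by fastforce
  have "card (\<Union>s\<in>C. Q s) = (\<Sum>s\<in>C. card (Q s))"
    by (rule card_UN_disjoint) (use fin disj in \<open>auto simp: Q_def\<close>)
  also have "\<dots> = card C * (2*m*m)" proof -
    have "(\<Sum>s\<in>C. card (Q s)) = (\<Sum>s\<in>C. 2*m*m)"
      by (rule sum.cong) (use cardQ CS in auto)
    then show ?thesis by simp
  qed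
  finally have e: "card (\<Union>s\<in>C. Q s) = card C * (2*m*m)" .
  have "card (\<Union>s\<in>C. Q s) \<le> card (S \<times> {..<m})"
    by (rule card_mono) (use QS CS in \<open>auto simp: S_def\<close>)
  also have "\<dots> = fact n * m" by (simp add: S_def card_cartesian_product)
  finally have "card C * (2*m) * m \<le> fact n * m" using e by (simp add: mult.assoc)
  then have "card C * (2*m) \<le> fact n" using assms(1) m_def by simp
  then have "real (card C) * (2 * real m) \<le> fact n"
    by (metis of_nat_fact of_nat_le_iff of_nat_mult of_nat_numeral)
  moreover have "real m = real n - 1" using assms(1) m_def by simp
  moreover have "real m > 0" using assms(1) m_def by simp
  ultimately show ?thesis by (simp add: pos_le_divide_eq)
qed

end
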